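(* Let $k\ge 2$ be an integer, let $x>0$ be real, and let $M_0\ge 6$ be an integer. Let $M=M(x,k)$ be the nonnegative integer satisfying $$2^k+3^k+\cdots+p_M^k\le x<2^k+3^k+\cdots+p_M^k+p_{M+1}^k .$$ If $M\ge M_0$, then $$\log M<\frac{\log x}{k+1}\cdot\frac{1}{A(M_0)}\qquad\text{and}\qquad \log M\ge \frac{\log x}{k+1}\cdot\frac{1}{B(M_0,k)}.$$
   Context: $p_n$ denotes the $n$th prime, with $p_1=2$. For $y\ge 6$ define $A(y)=\frac{\log(y/2)}{\log y}$ and $B(y,k)=\frac{\log(y+1)}{\log y}+\frac{\log\log\left((y+1)^2\right)}{\log y}\cdot\frac{k}{k+1}$. *)

theory Defs
  imports Complex_Main "HOL-Computational_Algebra.Primes" "HOL-Library.Infinite_Set"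
begin

text \<open>The n-th prime, 1-indexed: pr 1 = 2, pr 2 = 3, ... (pr 0 is a junk value).\<close>
definition pr :: "nat \<Rightarrow> nat" where
  "pr n = enumerate {p. prime p} (n - 1)"

definition A_fun :: "real \<Rightarrow> real" where
  "A_fun y = ln (y / 2) / ln y"

definition B_fun :: "real \<Rightarrow> real \<Rightarrow> real" where
  "B_fun y k = ln (y + 1) / ln y + ln (ln ((y + 1)^2)) / ln y * (k / (k + 1))"

end

theory Submission
  imports Defs "HOL-Analysis.Harmonic_Numbers"
begin

lemma ln2_bnds: "ln (2::real) \<ge> 693/1000 \<and> ln (2::real) \<le> 6932/10000"
  using ln_approx_bounds[of 2 4] by (simp add: eval_nat_numeral)
lemma ln3_bnds: "ln (3::real) \<ge> 1098/1000 \<and> ln (3::real) \<le> 10987/10000"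
  using ln_approx_bounds[of 3 5] by (simp add: eval_nat_numeral)
lemma ln5_bnds: "ln (5::real) \<ge> 1609/1000 \<and> ln (5::real) \<le> 16095/10000"
  using ln_approx_bounds[of 5 8] by (simp add: eval_nat_numeral)

lemma primes_inf: "infinite {p::nat. prime p}"
  using primes_infinite by blast

lemma enum_ge: "enumerate {p::nat. prime p} i \<ge> i + 2"
proof (induction i)
  case 0
  have "enumerate {p::nat. prime p} 0 \<in> {p. prime p}" by (rule enumerate_in_set[OF primes_inf])
  then have "prime (enumerate {p::nat. prime p} 0)" by simp
  then show ?case using prime_ge_2_nat[of "enumerate {p::nat. prime p} 0"] by simp
next
  case (Suc i)
  have "enumerate {p::nat. prime p} i < enumerate {p::nat. prime p} (Suc i)"
    by (rule enumerate_step[OF primes_inf])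
  then show ?case using Suc by simp
qed

lemma pr_ge: "n \<ge> 1 \<Longrightarrow> pr n \<ge> n + 1"
  unfolding pr_def using enum_ge[of "n-1"] by simp

lemma pr_prime: "prime (pr n)"
  unfolding pr_def using enumerate_in_set[OF primes_inf] by auto

lemma pr_mono: "1 \<le> i \<Longrightarrow> i \<le> j \<Longrightarrow> pr i \<le> pr j"
  unfolding pr_def using enumerate_mono_le_iff[OF primes_inf] by simp

lemma pr_le:
  assumes n: "n \<ge> 1" and fin: "finite A" and sub: "A \<subseteq> {p. prime p \<and> p \<le> B}"
    and c: "card A \<ge> n"
  shows "pr n \<le> B"
proof (rule ccontr)
  assume "\<not> pr n \<le> B"
  hence gt: "enumerate {p::nat. prime p} (n-1) > B" unfolding pr_def by simp
  have "A \<subseteq> enumerate {p::nat. prime p} ` {..<n-1}"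
  proof
    fix a assume "a \<in> A"
    hence a: "prime a" "a \<le> B" using sub by auto
    then obtain j where j: "enumerate {p::nat. prime p} j = a"
      using enumerate_Ex[OF primes_inf, of a] by auto
    have "j < n - 1"
    proof (rule ccontr)
      assume "\<not> j < n - 1"
      hence "enumerate {p::nat. prime p} (n-1) \<le> enumerate {p::nat. prime p} j"
        using enumerate_mono_le_iff[OF primes_inf] by simp
      thus False using j a gt by simp
    qed
    thus "a \<in> enumerate {p::nat. prime p} ` {..<n-1}" using j by auto
  qed
  hence "card A \<le> card (enumerate {p::nat. prime p} ` {..<n-1})"
    by (intro card_mono) auto
  also have "\<dots> \<le> n - 1" using card_image_le[of "{..<n-1}"] by simp
  finally show False using c n by simp
qed


lemma mult_bound:
  assumes p: "prime (p::nat)" and "a > 0"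
  shows "multiplicity p a \<le> a"
proof -
  have "p ^ multiplicity p a dvd a" by (rule multiplicity_dvd)
  hence "p ^ multiplicity p a \<le> a" using assms by (simp add: dvd_imp_le)
  moreover have "multiplicity p a < 2 ^ multiplicity p a" by (rule less_exp)
  moreover have "2 ^ multiplicity p a \<le> p ^ multiplicity p a"
    using prime_ge_2_nat[OF p] by (simp add: power_mono)
  ultimately show ?thesis by linarith
qed
lemma suc_div_eq: "d > 0 \<Longrightarrow> Suc n div d = n div d + (if d dvd Suc n then 1 else 0)"
  by (simp add: div_Suc dvd_eq_mod_eq_0)

lemma count_dvd:
  assumes p: "prime (p::nat)" and a: "a > 0" and K: "a \<le> K"
  shows "(\<Sum>j=1..K. (if p^j dvd a then 1 else 0::nat)) = multiplicity p a"
proof -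
  have "(\<Sum>j=1..K. (if p^j dvd a then 1 else 0::nat)) = card {j\<in>{1..K}. p^j dvd a}"
    by (simp add: sum.If_cases) (rule arg_cong[where f=card], auto)
  also have "{j\<in>{1..K}. p^j dvd a} = {1..multiplicity p a}"
  proof -
    have "multiplicity p a \<le> K" using mult_bound[OF p a] K by linarith
    moreover have "a \<noteq> 0" "\<not> is_unit p" using a p by auto
    ultimately have pd: "p^j dvd a \<longleftrightarrow> j \<le> multiplicity p a" for j
      using power_dvd_iff_le_multiplicity[of a p] by blast
    have "{j\<in>{1..K}. p^j dvd a} = {j\<in>{1..K}. j \<le> multiplicity p a}" by (simp only: pd)
    also have "\<dots> = {1..multiplicity p a}" using \<open>multiplicity p a \<le> K\<close> by auto
    finally show ?thesis .
  qed
  finally show ?thesis by simp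
qed
lemma legendre:
  assumes p: "prime (p::nat)"
  shows "n \<le> K \<Longrightarrow> multiplicity p (fact n :: nat) = (\<Sum>j=1..K. n div p^j)"
proof (induction n)
  case 0
  then show ?case by simp
next
  case (Suc n)
  have pe: "prime_elem p" using p by simp
  have "multiplicity p (fact (Suc n) :: nat) = multiplicity p (Suc n * fact n)"
    by (simp only: fact_Suc of_nat_id)
  also have "\<dots> = multiplicity p (Suc n) + multiplicity p (fact n :: nat)"
    by (rule prime_elem_multiplicity_mult_distrib[OF pe]) simp_all
  also have "multiplicity p (fact n :: nat) = (\<Sum>j=1..K. n div p^j)" using Suc by simp
  also have "multiplicity p (Suc n) = (\<Sum>j=1..K. (if p^j dvd Suc n then 1 else 0::nat))"
    using count_dvd[OF p, of "Suc n" K] Suc by simp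
  also have "(\<Sum>j=1..K. (if p^j dvd Suc n then 1 else 0::nat)) + (\<Sum>j=1..K. n div p^j)
      = (\<Sum>j=1..K. Suc n div p^j)"
    unfolding sum.distrib[symmetric]
  proof (intro sum.cong refl)
    fix j have "p^j > 0" using p prime_gt_0_nat by simp
    thus "(if p^j dvd Suc n then 1 else 0) + n div p^j = Suc n div p^j"
      using suc_div_eq[of "p^j" n] by simp
  qed
  finally show ?case .
qed
lemma ln_fact_sum:
  assumes "n \<le> N"
  shows "ln (fact n :: real) = (\<Sum>p\<in>{p. prime p \<and> p \<le> N}. real (multiplicity p (fact n :: nat)) * ln (real p))"
proof -
  have nz: "(fact n :: nat) \<noteq> 0" by simp
  have "(fact n :: real) = real (fact n :: nat)" by simp
  also have "(fact n :: nat) = (\<Prod>p\<in>prime_factors (fact n). p ^ multiplicity p (fact n :: nat))"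
    using prod_prime_factors[OF nz] by simp
  finally have "ln (fact n :: real) = ln (\<Prod>p\<in>prime_factors (fact n :: nat). real p ^ multiplicity p (fact n :: nat))"
    by simp
  also have "\<dots> = (\<Sum>p\<in>prime_factors (fact n :: nat). ln (real p ^ multiplicity p (fact n :: nat)))"
    by (rule ln_prod) (auto simp: in_prime_factors_iff prime_gt_0_nat)
  also have "\<dots> = (\<Sum>p\<in>prime_factors (fact n :: nat). real (multiplicity p (fact n :: nat)) * ln (real p))"
    by (intro sum.cong refl) (auto simp: ln_realpow in_prime_factors_iff prime_gt_0_nat)
  also have "\<dots> = (\<Sum>p\<in>{p. prime p \<and> p \<le> N}. real (multiplicity p (fact n :: nat)) * ln (real p))"
  proof (rule sum.mono_neutral_left)
    show "finite {p. prime p \<and> p \<le> N}" by simp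
    show "prime_factors (fact n :: nat) \<subseteq> {p. prime p \<and> p \<le> N}"
      using assms by (auto simp: in_prime_factors_iff prime_dvd_fact_iff)
    show "\<forall>i\<in>{p. prime p \<and> p \<le> N} - prime_factors (fact n). real (multiplicity i (fact n :: nat)) * ln (real i) = 0"
      by (auto simp: in_prime_factors_iff intro: not_dvd_imp_multiplicity_0)
  qed
  finally show ?thesis .
qed


lemma f_small: "\<forall>r\<in>{..<(30::nat)}. r \<le> 1 + r div 2 + r div 3 + r div 5"
  by (simp add: lessThan_nat_numeral)

lemma f_le: "real q + real (q div 30) - real (q div 2) - real (q div 3) - real (q div 5)
    \<le> (if q \<ge> 1 then 1 else 0)"
proof (cases "q = 0")
  case True then show ?thesis by simp
next
  case False
  define a r where "a = q div 30" and "r = q mod 30"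
  have q: "q = 30*a + r" unfolding a_def r_def by simp
  have r: "r < 30" unfolding r_def by simp
  have "q div 2 = 15*a + r div 2" unfolding q by simp
  moreover have "q div 3 = 10*a + r div 3" unfolding q by simp
  moreover have "q div 5 = 6*a + r div 5" unfolding q by simp
  moreover have "r \<le> 1 + r div 2 + r div 3 + r div 5" using f_small r by blast
  ultimately have "q + q div 30 \<le> 1 + q div 2 + q div 3 + q div 5"
    unfolding a_def[symmetric] using q by linarith
  hence "real (q + q div 30) \<le> real (1 + q div 2 + q div 3 + q div 5)" by (simp only: of_nat_le_iff)
  thus ?thesis using False by simp
qed

definition LT :: "nat \<Rightarrow> real" where
  "LT m = ln (fact (30*m)) + ln (fact m) - ln (fact (15*m)) - ln (fact (10*m)) - ln (fact (6*m))"

definition primepi :: "nat \<Rightarrow> nat" where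
  "primepi N = card {p. prime p \<and> p \<le> N}"

lemma card_E:
  assumes p: "prime (p::nat)" and N: "N \<ge> 1"
  shows "real (card {j\<in>{1..K}. p^j \<le> N}) * ln (real p) \<le> ln (real N)"
proof (cases "{j\<in>{1..K}. p^j \<le> N} = {}")
  case True then show ?thesis using N by (simp only: card.empty) simp
next
  case False
  define E where "E = {j\<in>{1..K}. p^j \<le> N}"
  have fin: "finite E" unfolding E_def by simp
  define e where "e = Max E"
  have "E \<noteq> {}" using False unfolding E_def .
  hence eE: "e \<in> E" unfolding e_def using fin by (intro Max_in)
  have "E \<subseteq> {1..e}" unfolding e_def using fin by (auto simp: E_def)
  hence "card E \<le> e" using card_mono[of "{1..e}" E] by simp
  hence "real (card E) * ln (real p) \<le> real e * ln (real p)"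
    using p prime_ge_2_nat[OF p] by (intro mult_right_mono) auto
  also have "\<dots> = ln (real p ^ e)" using p prime_gt_0_nat[OF p] by (simp add: ln_realpow)
  also have "\<dots> \<le> ln (real N)"
  proof -
    have "p ^ e \<le> N" using eE by (simp add: E_def)
    hence "real p ^ e \<le> real N" by (metis of_nat_le_iff of_nat_power)
    thus ?thesis using prime_gt_0_nat[OF p] N by (subst ln_le_cancel_iff) auto
  qed
  finally show ?thesis unfolding E_def .
qed

lemma sumF_le:
  assumes p: "prime (p::nat)" and m: "m \<ge> 1"
  shows "(\<Sum>j=1..30*m. real (30*m div p^j) + real ((30*m div p^j) div 30) - real ((30*m div p^j) div 2)
            - real ((30*m div p^j) div 3) - real ((30*m div p^j) div 5)) * ln (real p) \<le> ln (real (30*m))"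
proof -
  have "(\<Sum>j=1..30*m. real (30*m div p^j) + real ((30*m div p^j) div 30) - real ((30*m div p^j) div 2)
            - real ((30*m div p^j) div 3) - real ((30*m div p^j) div 5))
      \<le> (\<Sum>j=1..30*m. (if p^j \<le> 30*m then 1 else 0))"
  proof (rule sum_mono)
    fix j
    have pj: "p^j > 0" using prime_gt_0_nat[OF p] by simp
    have "(30*m div p^j \<ge> 1) = (p^j \<le> 30*m)" using pj by (simp add: div_greater_zero_iff Suc_le_eq)
    thus "real (30*m div p^j) + real ((30*m div p^j) div 30) - real ((30*m div p^j) div 2)
            - real ((30*m div p^j) div 3) - real ((30*m div p^j) div 5) \<le> (if p^j \<le> 30*m then 1 else 0)"
      using f_le[of "30*m div p^j"] by simp
  qed
  also have "(\<Sum>j=1..30*m. (if p^j \<le> 30*m then 1 else 0::real)) = real (card {j\<in>{1..30*m}. p^j \<le> 30*m})"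
    by (simp add: sum.If_cases) (rule arg_cong[where f=card], auto)
  finally have 1: "(\<Sum>j=1..30*m. real (30*m div p^j) + real ((30*m div p^j) div 30) - real ((30*m div p^j) div 2)
            - real ((30*m div p^j) div 3) - real ((30*m div p^j) div 5)) \<le> real (card {j\<in>{1..30*m}. p^j \<le> 30*m})" .
  have "ln (real p) \<ge> 0" using prime_ge_2_nat[OF p] by simp
  from mult_right_mono[OF 1 this] card_E[OF p, of "30*m" "30*m"] m show ?thesis by simp
qed


lemma div_div_cancel: "(c::nat) > 0 \<Longrightarrow> (c*x) div d div c = x div d"
  by (simp add: div_mult2_eq[symmetric] mult.commute[of d c])

lemma ln_fact_leg:
  assumes "a \<le> N"
  shows "ln (fact a :: real) = (\<Sum>p\<in>{p. prime p \<and> p \<le> N}. real (\<Sum>j=1..N. a div p^j) * ln (real p))"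
  unfolding ln_fact_sum[OF assms]
  by (intro sum.cong refl) (simp add: legendre[OF _ assms])

lemma cheb_upper:
  assumes m: "m \<ge> 1"
  shows "LT m \<le> real (primepi (30*m)) * ln (real (30*m))"
proof -
  define N where "N = 30*m"
  define P where "P = {p. prime p \<and> p \<le> N}"
  define F where "F p = (\<Sum>j=1..30*m. real (30*m div p^j) + real ((30*m div p^j) div 30) - real ((30*m div p^j) div 2)
            - real ((30*m div p^j) div 3) - real ((30*m div p^j) div 5))" for p :: nat
  define V where "V a p = real (\<Sum>j=1..N. a div p^j)" for a p :: nat
  have e: "ln (fact a :: real) = (\<Sum>p\<in>P. V a p * ln (real p))" if "a \<le> N" for a
    unfolding P_def V_def using ln_fact_leg[OF that] .
  have "LT m = (\<Sum>p\<in>P. V (30*m) p * ln (real p) + V m p * ln (real p) - V (15*m) p * ln (real p)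
      - V (10*m) p * ln (real p) - V (6*m) p * ln (real p))"
    unfolding LT_def sum_subtractf sum.distrib
    by (subst (1 2 3 4 5) e) (simp_all add: N_def)
  also have "\<dots> = (\<Sum>p\<in>P. F p * ln (real p))"
  proof (intro sum.cong refl)
    fix p assume "p \<in> P"
    have a: "m div p^j = (30*m div p^j) div 30" for j using div_div_cancel[of 30 m "p^j"] by simp
    have b: "15*m div p^j = (30*m div p^j) div 2" for j using div_div_cancel[of 2 "15*m" "p^j"] by simp
    have c: "10*m div p^j = (30*m div p^j) div 3" for j using div_div_cancel[of 3 "10*m" "p^j"] by simp
    have d: "6*m div p^j = (30*m div p^j) div 5" for j using div_div_cancel[of 5 "6*m" "p^j"] by simp
    have "F p = V (30*m) p + V m p - V (15*m) p - V (10*m) p - V (6*m) p"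
      unfolding F_def V_def N_def a[symmetric] b[symmetric] c[symmetric] d[symmetric]
      by (simp add: sum_subtractf sum.distrib)
    thus "V (30*m) p * ln (real p) + V m p * ln (real p) - V (15*m) p * ln (real p)
      - V (10*m) p * ln (real p) - V (6*m) p * ln (real p) = F p * ln (real p)"
      by (simp only: left_diff_distrib distrib_right)
  qed
  also have "\<dots> \<le> (\<Sum>p\<in>P. ln (real N))"
    by (intro sum_mono) (use sumF_le m in \<open>auto simp: P_def F_def N_def\<close>)
  also have "\<dots> = real (primepi (30*m)) * ln (real (30*m))"
    by (simp add: P_def primepi_def N_def)
  finally show ?thesis .
qed



lemma ln_succ_bounds:
  assumes "n \<ge> 1"
  shows "real n * (ln (real n + 1) - ln (real n)) \<le> 1"
    and "(real n + 1) * (ln (real n + 1) - ln (real n)) \<ge> 1"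
proof -
  have n: "real n > 0" using assms by simp
  have eq: "ln (real n + 1) - ln (real n) = ln (1 + 1 / real n)"
  proof -
    have "1 + 1 / real n = (real n + 1) / real n" using n by (simp add: field_simps)
    thus ?thesis using n by (simp add: ln_div)
  qed
  have "ln (1 + 1 / real n) \<le> 1 / real n" by (rule ln_add_one_self_le_self) simp
  thus "real n * (ln (real n + 1) - ln (real n)) \<le> 1" using n unfolding eq
    by (simp add: field_simps)
  have "ln (real n / (real n + 1)) \<le> real n / (real n + 1) - 1"
    by (rule ln_le_minus_one) (use n in simp)
  moreover have "ln (real n / (real n + 1)) = - (ln (real n + 1) - ln (real n))"
    using n by (simp add: ln_div)
  moreover have "real n / (real n + 1) - 1 = - 1 / (real n + 1)" using n by (simp add: field_simps)
  ultimately have "1 / (real n + 1) \<le> ln (real n + 1) - ln (real n)" by simp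
  thus "(real n + 1) * (ln (real n + 1) - ln (real n)) \<ge> 1" using n
    by (simp add: field_simps)
qed

lemma lnfact_bounds:
  assumes "n \<ge> 1"
  shows "real n * ln (real n) - real n + 1 \<le> ln (fact n :: real)
       \<and> ln (fact n :: real) \<le> real n * ln (real n) - real n + 1 + ln (real n)"
  using assms
proof (induction n rule: dec_induct)
  case base
  then show ?case by simp
next
  case (step n)
  have n: "real n > 0" using step by simp
  have f: "ln (fact (Suc n) :: real) = ln (real n + 1) + ln (fact n)"
    by (simp add: fact_Suc ln_mult add.commute)
  have b1: "real n * (ln (real n + 1) - ln (real n)) \<le> 1" using ln_succ_bounds(1)[OF step(1)] .
  have b2: "(real n + 1) * (ln (real n + 1) - ln (real n)) \<ge> 1" using ln_succ_bounds(2)[OF step(1)] .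
  show ?case unfolding f using step(3) b1 b2
    by (simp add: algebra_simps)
qed

lemma LT_lower:
  assumes m: "m \<ge> 1"
  shows "LT m \<ge> 276/10 * real m - 781/100 - 3 * ln (real m)"
proof -
  define x where "x = real m"
  define l where "l = ln x"
  have x: "x \<ge> 1" using m by (simp add: x_def)
  have lnm: "ln (a * x) = ln a + l" if "a > 0" for a :: real
    using that x by (simp add: ln_mult l_def)
  have F: "real (k*m) = k * x" for k :: nat by (simp add: x_def)
  have b30: "ln (fact (30*m) :: real) \<ge> 30 * x * (ln 30 + l) - 30 * x + 1"
    using lnfact_bounds[of "30*m"] m lnm[of 30] unfolding F by simp
  have b1: "ln (fact m :: real) \<ge> x * l - x + 1"
    using lnfact_bounds[of "m"] m unfolding x_def l_def by simp
  have b15: "ln (fact (15*m) :: real) \<le> 15 * x * (ln 15 + l) - 15 * x + 1 + ln 15 + l"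
    using lnfact_bounds[of "15*m"] m lnm[of 15] unfolding F by simp
  have b10: "ln (fact (10*m) :: real) \<le> 10 * x * (ln 10 + l) - 10 * x + 1 + ln 10 + l"
    using lnfact_bounds[of "10*m"] m lnm[of 10] unfolding F by simp
  have b6: "ln (fact (6*m) :: real) \<le> 6 * x * (ln 6 + l) - 6 * x + 1 + ln 6 + l"
    using lnfact_bounds[of "6*m"] m lnm[of 6] unfolding F by simp
  have l30: "ln (30::real) = ln 2 + ln 3 + ln 5"
    using ln_mult[of 2 15] ln_mult[of 3 5] by simp
  have l15: "ln (15::real) = ln 3 + ln 5" using ln_mult[of 3 5] by simp
  have l10: "ln (10::real) = ln 2 + ln 5" using ln_mult[of 2 5] by simp
  have l6: "ln (6::real) = ln 2 + ln 3" using ln_mult[of 2 3] by simp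
  define C where "C = 14 * ln 2 + 9 * ln 3 + 5 * ln (5::real)"
  define S where "S = ln 2 + ln 3 + ln (5::real)"
  have h1: "LT m \<ge> x * C - 1 - 2 * S - 3 * l"
    using b30 b1 b15 b10 b6 unfolding LT_def l30 l15 l10 l6 C_def S_def by (simp add: algebra_simps)
  have h2: "x * C \<ge> x * (276/10)"
    using ln2_bnds ln3_bnds ln5_bnds x unfolding C_def by (intro mult_left_mono) auto
  have h3: "S \<le> 3402/1000" using ln2_bnds ln3_bnds ln5_bnds unfolding S_def by linarith
  from h1 h2 h3 have "LT m \<ge> (276/10) * x - 781/100 - 3 * l" by linarith
  thus ?thesis unfolding x_def l_def .
qed


lemma pr_big:
  assumes n50: "n \<ge> 50"
  shows "real (pr n) \<le> 2 * real n * ln (real n)"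
proof -
  define L where "L = ln (real n)"
  define X where "X = 2 * real n * L"
  have n: "real n \<ge> 50" using n50 by simp
  have l50: "ln (50::real) = ln 2 + 2 * ln 5"
  proof -
    have "ln (50::real) = ln (2 * (5 * 5))" by simp
    also have "\<dots> = ln 2 + (ln 5 + ln 5)" by (simp only: ln_mult) simp_all
    finally show ?thesis by simp
  qed
  have "ln (50::real) \<le> L" unfolding L_def using n by simp
  hence L: "L \<ge> 39/10" using l50 ln2_bnds ln5_bnds by linarith
  have "real n * L \<ge> 50 * (39/10)" using n L by (intro mult_mono) auto
  hence Xge: "X \<ge> 390" unfolding X_def by linarith
  define m where "m = nat \<lfloor>X / 30\<rfloor>"
  have mle: "real m \<le> X / 30" unfolding m_def using Xge by linarith
  have mgt: "real m > X / 30 - 1" unfolding m_def using Xge by linarith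
  have m1: "m \<ge> 1" using mgt Xge by linarith
  define N where "N = 30 * m"
  have NX: "real N \<le> X" unfolding N_def using mle by simp
  have N1: "real N \<ge> 30" unfolding N_def using m1 by simp
  have key: "real (primepi N) * ln (real N) \<ge> 276/10 * real m - 781/100 - 3 * ln (real m)"
    using cheb_upper[OF m1] LT_lower[OF m1] unfolding N_def by linarith
  have lnm: "ln (real m) \<le> ln X - ln 30"
  proof -
    have "ln (real m) \<le> ln (X / 30)" using m1 mle by simp
    also have "\<dots> = ln X - ln 30" using Xge by (simp add: ln_div)
    finally show ?thesis .
  qed
  have lnN: "ln (real N) \<le> ln X" using NX N1 by simp
  have lnX: "ln X = ln 2 + L + ln L"
    unfolding X_def L_def using n L unfolding L_def by (simp add: ln_mult)
  have lnL: "ln L \<le> 2 * ln 2 - 1 + L / 4"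
  proof -
    have "ln (L / 4) \<le> L / 4 - 1" using L by (intro ln_le_minus_one) simp
    moreover have "ln (L / 4) = ln L - 2 * ln 2"
    proof -
      have "ln (4::real) = ln (2 * 2)" by simp
      also have "\<dots> = 2 * ln 2" by (simp only: ln_mult) simp_all
      finally show ?thesis using L by (simp add: ln_div)
    qed
    ultimately show ?thesis by linarith
  qed
  have l30: "ln (30::real) = ln 2 + ln 3 + ln 5"
    using ln_mult[of 2 15] ln_mult[of 3 5] by simp
  have prod: "(L - 39/10) * (59/100 * real n - 375/100) \<ge> 0"
    using L n by (intro mult_nonneg_nonneg) auto
  have nL: "real n * L = X / 2" unfolding X_def by simp
  have "276/10 * real m - 781/100 - 3 * ln (real m) \<ge> real n * ln X"
  proof -
    have "real n * ln X = real n * ln 2 + real n * L + real n * ln L"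
      unfolding lnX by (simp add: algebra_simps)
    moreover have "real n * ln L \<le> real n * (2 * ln 2 - 1 + L / 4)"
      using lnL n by (intro mult_left_mono) auto
    moreover have "real n * (2 * ln 2 - 1 + L / 4) = 2 * (real n * ln 2) - real n + (real n * L) / 4"
      by (simp add: algebra_simps)
    moreover have "real n * ln 2 \<le> real n * (6932/10000)"
      using ln2_bnds n by (intro mult_left_mono) auto
    ultimately have A: "real n * ln X \<le> (1080/1000) * real n + X / 2 + X / 8"
      using nL by linarith
    have B: "3 * ln X \<le> 9 * ln 2 - 3 + (15/4) * L"
      using lnX lnL by linarith
    have C: "276/10 * real m \<ge> (92/100) * X - 276/10" using mgt by linarith
    have "(L - 39/10) * (59/100 * real n - 375/100)
        = (59/100) * (real n * L) - (375/100) * L - (2301/1000) * real n + 14625/1000"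
      by (simp add: field_simps)
    hence D: "(59/200) * X - (375/100) * L - (2301/1000) * real n + 14625/1000 \<ge> 0"
      using prod nL by linarith
    show ?thesis using A B C D lnm l30 ln2_bnds ln3_bnds ln5_bnds n by linarith
  qed
  moreover have "real n * ln (real N) \<le> real n * ln X" using lnN by (intro mult_left_mono) auto
  ultimately have "real (primepi N) * ln (real N) \<ge> real n * ln (real N)"
    using key by linarith
  moreover have "ln (real N) > 0" using N1 by simp
  ultimately have "real (primepi N) \<ge> real n" by simp
  hence "primepi N \<ge> n" by simp
  hence "pr n \<le> N" unfolding primepi_def using n50
    by (intro pr_le[of n "{p. prime p \<and> p \<le> N}"]) auto
  hence "real (pr n) \<le> X" using NX by linarith
  thus ?thesis unfolding X_def L_def .
qed

definition PL :: "nat list" where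
  "PL = [2, 3, 5, 7, 11, 13, 17, 19, 23, 29, 31, 37, 41, 43, 47, 53, 59, 61, 67, 71, 73, 79, 83, 89, 97, 101, 103, 107, 109, 113, 127, 131, 137, 139, 149, 151, 157, 163, 167, 173, 179, 181, 191, 193, 197, 199, 211, 223, 227]"
lemma PL_prime: "list_all prime PL"
  unfolding PL_def by code_simp
lemma PL_sorted: "sorted PL" "distinct PL" "length PL = 49"
  unfolding PL_def by simp_all
definition jj :: "nat \<Rightarrow> nat" where
  "jj n = (if n < 8 then 2 else if n < 16 then 3 else if n < 32 then 4 else 5)"
lemma PL_bound: "\<forall>n\<in>{7..<50}. 3 * PL ! (n - 1) \<le> 4 * n * jj n"
  unfolding PL_def jj_def by code_simp

lemma jj_pow: "n \<ge> 4 \<Longrightarrow> n < 64 \<Longrightarrow> 2 ^ jj n \<le> n"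
  unfolding jj_def by auto

lemma pr_small:
  assumes n7: "n \<ge> 7" and n50: "n < 50"
  shows "real (pr n) \<le> 2 * real n * ln (real n)"
proof -
  define B where "B = PL ! (n - 1)"
  define A where "A = set (take n PL)"
  have len: "length PL = 49" using PL_sorted by simp
  have sub: "A \<subseteq> {p. prime p \<and> p \<le> B}"
  proof
    fix x assume "x \<in> A"
    then obtain i where i: "i < length (take n PL)" "x = take n PL ! i"
      unfolding A_def by (auto simp: in_set_conv_nth)
    have iN: "i < n" "i < 49" using i len n50 by auto
    have x: "x = PL ! i" using i iN by simp
    have "prime x" using PL_prime iN len unfolding x by (simp add: list_all_length)
    moreover have "x \<le> B" unfolding x B_def
      using PL_sorted(1) iN n50 len by (intro sorted_nth_mono) auto
    ultimately show "x \<in> {p. prime p \<and> p \<le> B}" by simp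
  qed
  have cardA: "card A = n" unfolding A_def
    using PL_sorted len n50 by (simp add: distinct_card)
  have prB: "pr n \<le> B" using n7 sub cardA unfolding A_def by (intro pr_le[of n A]) (auto simp: A_def)
  have b: "3 * B \<le> 4 * n * jj n" using PL_bound n7 n50 unfolding B_def by auto
  have "2 ^ jj n \<le> n" using jj_pow n7 n50 by simp
  hence "real (2 ^ jj n) \<le> real n" by (simp only: of_nat_le_iff)
  hence "ln (2 ^ jj n :: real) \<le> ln (real n)" using n7 by simp
  hence "real (jj n) * ln 2 \<le> ln (real n)" by (simp add: ln_realpow)
  moreover have "real (jj n) * (2/3) \<le> real (jj n) * ln 2"
    using ln2_ge_two_thirds by (intro mult_left_mono) auto
  ultimately have "real (jj n) * (2/3) \<le> ln (real n)" by linarith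
  hence "real n * (real (jj n) * (2/3)) \<le> real n * ln (real n)" by (intro mult_left_mono) auto
  moreover have "3 * real B \<le> 4 * real n * real (jj n)" using b by (metis of_nat_le_iff of_nat_mult of_nat_numeral)
  moreover have "real (pr n) \<le> real B" using prB by simp
  ultimately show ?thesis by (simp add: algebra_simps) 
qed

lemma pr_bound: "n \<ge> 7 \<Longrightarrow> real (pr n) \<le> 2 * real n * ln (real n)"
  using pr_small pr_big by (cases "n < 50") auto


lemma pow_diff_le:
  fixes a b :: real
  assumes "0 \<le> a" "a \<le> b"
  shows "b ^ (Suc k) - a ^ (Suc k) \<le> real (Suc k) * b ^ k * (b - a)"
proof (induction k)
  case 0 then show ?case by simp
next
  case (Suc k)
  have "b ^ Suc (Suc k) - a ^ Suc (Suc k) = b * (b ^ Suc k - a ^ Suc k) + a ^ Suc k * (b - a)"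
    by (simp add: algebra_simps)
  also have "\<dots> \<le> b * (real (Suc k) * b ^ k * (b - a)) + b ^ Suc k * (b - a)"
  proof (rule add_mono)
    show "b * (b ^ Suc k - a ^ Suc k) \<le> b * (real (Suc k) * b ^ k * (b - a))"
      using Suc assms by (intro mult_left_mono) auto
    show "a ^ Suc k * (b - a) \<le> b ^ Suc k * (b - a)"
      using assms by (intro mult_right_mono power_mono) auto
  qed
  also have "\<dots> = real (Suc (Suc k)) * b ^ Suc k * (b - a)" by (simp add: algebra_simps)
  finally show ?case .
qed

lemma sum_pow_lower: "(real k + 1) * (\<Sum>i=1..M. real i ^ k) \<ge> real M ^ (Suc k)"
proof (induction M)
  case 0 then show ?case by simp
next
  case (Suc M)
  define a where "a = real M"
  define b where "b = real M + 1"
  have "b ^ (Suc k) - a ^ (Suc k) \<le> real (Suc k) * b ^ k * (b - a)"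
    using pow_diff_le[of a b k] unfolding a_def b_def by simp
  moreover have "real (Suc k) * b ^ k * (b - a) = (real k + 1) * b ^ k" unfolding a_def b_def by simp
  ultimately have "b ^ (Suc k) \<le> a ^ (Suc k) + (real k + 1) * b ^ k" by linarith
  also have "\<dots> \<le> (real k + 1) * (\<Sum>i=1..M. real i ^ k) + (real k + 1) * b ^ k"
    using Suc unfolding a_def by simp
  also have "\<dots> = (real k + 1) * (\<Sum>i=1..Suc M. real i ^ k)"
    unfolding b_def by (simp add: algebra_simps)
  finally show ?case unfolding b_def by (simp add: ac_simps)
qed

lemma A_mono:
  assumes "6 \<le> y" "y \<le> z"
  shows "A_fun y \<le> A_fun z"
proof -
  have ly: "ln y > 0" "ln y \<le> ln z" using assms by auto
  have "A_fun y = 1 - ln 2 / ln y" unfolding A_fun_def using assms ly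
    by (simp add: ln_div field_simps)
  moreover have "A_fun z = 1 - ln 2 / ln z" unfolding A_fun_def using assms ly
    by (simp add: ln_div field_simps)
  moreover have "ln 2 / ln z \<le> ln 2 / ln y"
    using ly by (intro divide_left_mono) auto
  ultimately show ?thesis by simp
qed

lemma A_pos: "6 \<le> y \<Longrightarrow> A_fun y > 0"
  unfolding A_fun_def by (intro divide_pos_pos) auto

lemma B_mono:
  assumes y: "6 \<le> y" and yz: "y \<le> z" and k: "k \<ge> 0"
  shows "B_fun z k \<le> B_fun y k"
proof -
  have ly: "ln y > 0" "ln y \<le> ln z" "ln z > 0" using assms by auto
  have g1: "ln (z+1) / ln z \<le> ln (y+1) / ln y"
  proof -
    have "1 + 1/z = (z+1)/z" "1 + 1/y = (y+1)/y" using assms by (simp_all add: field_simps)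
    hence "ln (z+1) = ln z + ln (1 + 1/z)" "ln (y+1) = ln y + ln (1 + 1/y)" using assms
      by (simp_all add: ln_div)
    moreover have "ln (1 + 1/z) \<le> ln (1 + 1/y)"
    proof -
      have iz: "1/z \<le> 1/y" by (rule divide_left_mono) (use assms in auto)
      have "0 < 1 + 1/z" using assms by (simp add: add_pos_pos)
      thus ?thesis using iz by (subst ln_le_cancel_iff) auto
    qed
    moreover have "ln (1 + 1/z) \<ge> 0" using assms by simp
    moreover have "ln (1 + 1/z) * ln y \<le> ln (1 + 1/y) * ln z"
      using calculation ly by (intro mult_mono) auto
    ultimately have "ln (z+1) * ln y \<le> ln (y+1) * ln z" by (simp add: algebra_simps)
    thus ?thesis using ly by (simp add: field_simps)
  qed
  define u where "u = ln ((y+1)^2)"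
  define v where "v = ln ((z+1)^2)"
  have u: "u = 2 * ln (y+1)" unfolding u_def using assms by (simp add: ln_realpow)
  have v: "v = 2 * ln (z+1)" unfolding v_def using assms by (simp add: ln_realpow)
  have l6: "ln (6::real) = ln 2 + ln 3" using ln_mult[of 2 3] by simp
  have "ln (y+1) \<ge> ln 6" using assms by simp
  hence u3: "u \<ge> 3" using u l6 ln2_bnds ln3_bnds by linarith
  have lnu: "ln u \<ge> 1"
  proof -
    have "exp 1 \<le> u" using e_less_272 u3 by linarith
    hence "ln (exp 1) \<le> ln u" using u3 by (subst ln_le_cancel_iff) auto
    thus ?thesis by simp
  qed
  have uv: "u \<le> v" unfolding u v using assms by simp
  have vu: "v - u \<le> 2 * (ln z - ln y)"
  proof -
    have "(z+1)/(y+1) \<le> z/y" using assms by (simp add: field_simps)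
    hence "ln ((z+1)/(y+1)) \<le> ln (z/y)" using assms by (subst ln_le_cancel_iff) auto
    thus ?thesis unfolding u v using assms by (simp add: ln_div)
  qed
  have lvu: "ln (v/u) \<le> (v - u)/u" using ln_le_minus_one[of "v/u"] u3 uv by (simp add: field_simps)
  have "ln v = ln u + ln (v/u)" using u3 uv by (simp add: ln_div)
  hence "ln v * ln y = ln u * ln y + ln (v/u) * ln y" by (simp add: algebra_simps)
  also have "ln (v/u) * ln y \<le> (v - u)/u * ln y" using lvu ly by (intro mult_right_mono) auto
  also have "(v - u)/u * ln y \<le> (2 * (ln z - ln y))/u * ln y"
    using vu ly u3 by (intro mult_right_mono divide_right_mono) auto
  also have "(2 * (ln z - ln y))/u * ln y = (ln z - ln y) * (ln y / ln (y+1))"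
    unfolding u using u3 u by (simp add: field_simps)
  also have "\<dots> \<le> (ln z - ln y) * 1"
    using ly assms by (intro mult_left_mono) auto
  also have "\<dots> \<le> (ln z - ln y) * ln u" using lnu ly by (intro mult_left_mono) auto
  finally have "ln v * ln y \<le> ln u * ln z" by (simp add: algebra_simps)
  hence g2: "ln v / ln z \<le> ln u / ln y" using ly by (simp add: field_simps)
  have "ln v / ln z * (k / (k+1)) \<le> ln u / ln y * (k / (k+1))"
    using g2 k by (intro mult_right_mono) auto
  thus ?thesis using g1 unfolding B_fun_def u_def v_def by simp
qed


theorem lemma2p5:
  fixes k M M0 :: nat and x :: real
  assumes "k \<ge> 2" and "x > 0" and "M0 \<ge> 6"
    and "(\<Sum>i=1..M. real (pr i) ^ k) \<le> x"
    and "x < (\<Sum>i=1..M+1. real (pr i) ^ k)"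
    and "M \<ge> M0"
  shows "ln (real M) < ln x / (real k + 1) * (1 / A_fun (real M0))
       \<and> ln (real M) \<ge> ln x / (real k + 1) * (1 / B_fun (real M0) (real k))"
proof
  have M6: "real M \<ge> 6" "real M0 \<ge> 6" "real M0 \<le> real M" using assms by auto
  have lnM: "ln (real M) > 0" using M6 by simp
  have K: "real k + 1 > 0" by simp
  have S1: "(\<Sum>i=1..M. real i ^ k) \<le> (\<Sum>i=1..M. real (pr i) ^ k)"
  proof (intro sum_mono power_mono)
    fix i assume "i \<in> {1..M}"
    hence "pr i \<ge> i + 1" using pr_ge by auto
    thus "real i \<le> real (pr i)" by simp
  qed simp
  have S2: "(real k + 1) * (\<Sum>i=1..M. real i ^ k) \<ge> real M ^ Suc k" by (rule sum_pow_lower)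
  have pow2: "real k + 1 < 2 ^ Suc k"
  proof -
    have "k + 1 < 2 ^ (k + 1)" by (rule less_exp)
    hence "real (k + 1) < real (2 ^ (k+1))" by (simp only: of_nat_less_iff)
    thus ?thesis by simp
  qed
  have Mp: "real M ^ Suc k > 0" using M6 by simp
  have "(real M / 2) ^ Suc k = real M ^ Suc k / 2 ^ Suc k" by (simp add: power_divide)
  also have "\<dots> < real M ^ Suc k / (real k + 1)"
    using Mp pow2 K by (intro divide_strict_left_mono) auto
  also have "\<dots> \<le> (\<Sum>i=1..M. real i ^ k)" using S2 K by (simp add: field_simps)
  also have "\<dots> \<le> x" using S1 assms(4) by linarith
  finally have lt1: "(real M / 2) ^ Suc k < x" .
  have "ln ((real M / 2) ^ Suc k) < ln x" using lt1 M6 assms(2) by (subst ln_less_cancel_iff) auto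
  moreover have "ln ((real M / 2) ^ Suc k) = real (Suc k) * ln (real M / 2)"
    by (rule ln_realpow)
  ultimately have "(real k + 1) * ln (real M / 2) < ln x" by (simp add: ac_simps)
  moreover have "ln (real M / 2) = A_fun (real M) * ln (real M)"
    unfolding A_fun_def using lnM by simp
  moreover have "A_fun (real M0) * ln (real M) \<le> A_fun (real M) * ln (real M)"
    using A_mono[OF M6(2,3)] lnM by (intro mult_right_mono) auto
  moreover have "(real k + 1) * (A_fun (real M0) * ln (real M)) \<le> (real k + 1) * (A_fun (real M) * ln (real M))"
    using calculation(3) K by (intro mult_left_mono) auto
  ultimately have p1a: "(real k + 1) * (A_fun (real M0) * ln (real M)) < ln x"
    by (metis order_le_less_trans)
  have p1: "ln (real M) * ((real k + 1) * A_fun (real M0)) < ln x"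
    using p1a by (simp add: ac_simps)
  have A0: "A_fun (real M0) > 0" using A_pos M6 by simp
  have D: "(real k + 1) * A_fun (real M0) > 0" using A0 K by simp
  have "ln x / (real k + 1) * (1 / A_fun (real M0)) = ln x / ((real k + 1) * A_fun (real M0))" by simp
  thus "ln (real M) < ln x / (real k + 1) * (1 / A_fun (real M0))"
    using p1 pos_less_divide_eq[OF D] by simp
  define W where "W = ln ((real M + 1)^2)"
  have W: "W = 2 * ln (real M + 1)" unfolding W_def using M6 by (simp add: ln_realpow)
  have Wpos: "W > 0" using W M6 by simp
  have prb: "real (pr (M+1)) \<le> (real M + 1) * W"
    using pr_bound[of "M+1"] assms W by (simp add: algebra_simps)
  have "(\<Sum>i=1..M+1. real (pr i) ^ k) \<le> (\<Sum>i=1..M+1. ((real M + 1) * W) ^ k)"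
  proof (intro sum_mono power_mono)
    fix i assume "i \<in> {1..M+1}"
    hence "pr i \<le> pr (M+1)" using pr_mono by auto
    hence "real (pr i) \<le> real (pr (M+1))" by simp
    thus "real (pr i) \<le> (real M + 1) * W" using prb by linarith
  qed simp
  also have "\<dots> = (real M + 1) * ((real M + 1) * W) ^ k" by simp
  finally have "x < (real M + 1) * ((real M + 1) * W) ^ k" using assms(5) by linarith
  hence "ln x < ln ((real M + 1) * ((real M + 1) * W) ^ k)"
    using assms(2) by (subst ln_less_cancel_iff) auto
  also have "\<dots> = ln (real M + 1) + ln (((real M + 1) * W) ^ k)"
    using Wpos M6 by (subst ln_mult) auto
  also have "ln (((real M + 1) * W) ^ k) = real k * ln ((real M + 1) * W)"
    by (rule ln_realpow)
  also have "ln ((real M + 1) * W) = ln (real M + 1) + ln W"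
    using Wpos M6 by (subst ln_mult) auto
  also have "ln (real M + 1) + real k * (ln (real M + 1) + ln W) = (real k + 1) * ln (real M + 1) + real k * ln W"
    by (simp add: algebra_simps)
  also have "\<dots> = (real k + 1) * (B_fun (real M) (real k) * ln (real M))"
  proof -
    define a where "a = ln (real M + 1)"
    define b where "b = ln W"
    define l where "l = ln (real M)"
    have l: "l > 0" using lnM unfolding l_def .
    have "B_fun (real M) (real k) * l = a / l * l + b / l * (real k / (real k + 1)) * l"
      unfolding B_fun_def a_def b_def l_def W_def by (simp only: distrib_right)
    also have "\<dots> = a + b * (real k / (real k + 1))" using l by simp
    finally have eq: "B_fun (real M) (real k) * l = a + b * (real k / (real k + 1))" .
    have e2: "(real k + 1) * (b * (real k / (real k + 1))) = b * real k" using K by (simp add: field_simps)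
    have "(real k + 1) * (B_fun (real M) (real k) * l) = (real k + 1) * (a + b * (real k / (real k + 1)))"
      using eq by simp
    also have "\<dots> = (real k + 1) * a + (real k + 1) * (b * (real k / (real k + 1)))" by (rule distrib_left)
    also have "\<dots> = (real k + 1) * a + b * real k" using e2 by simp
    finally have "(real k + 1) * (B_fun (real M) (real k) * l) = (real k + 1) * a + b * real k" .
    thus ?thesis unfolding a_def b_def l_def by simp
  qed
  also have "\<dots> \<le> (real k + 1) * (B_fun (real M0) (real k) * ln (real M))"
    using B_mono[OF M6(2,3), of "real k"] lnM K by (intro mult_left_mono mult_right_mono) auto
  finally have p2: "ln x < ln (real M) * ((real k + 1) * B_fun (real M0) (real k))"
    by (simp add: algebra_simps)
  have B0: "B_fun (real M0) (real k) > 0"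
  proof -
    have "ln (real M0 + 1) / ln (real M0) > 0" using M6 by simp
    moreover have "ln (ln ((real M0 + 1)^2)) \<ge> 0"
    proof -
      have "(7::real)^2 \<le> (real M0 + 1)^2" using M6 by (intro power_mono) auto
      hence "(real M0 + 1)^2 \<ge> exp 1" using e_less_272 by simp
      hence "ln (exp 1) \<le> ln ((real M0 + 1)^2)" by (subst ln_le_cancel_iff) auto
      hence "ln ((real M0 + 1)^2) \<ge> 1" by simp
      thus ?thesis by simp
    qed
    moreover have "ln (real M0) > 0" using M6 by simp
    ultimately have t1: "0 < ln (real M0 + 1) / ln (real M0)"
      and t2: "0 \<le> ln (ln ((real M0 + 1)^2)) / ln (real M0)" by simp_all
    have t3: "0 \<le> real k / (real k + 1)" by simp
    have "0 \<le> ln (ln ((real M0 + 1)^2)) / ln (real M0) * (real k / (real k + 1))"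
      using t2 t3 by (rule mult_nonneg_nonneg)
    thus ?thesis unfolding B_fun_def using t1 by linarith
  qed
  have D2: "(real k + 1) * B_fun (real M0) (real k) > 0" using B0 K by simp
  have "ln x / (real k + 1) * (1 / B_fun (real M0) (real k)) = ln x / ((real k + 1) * B_fun (real M0) (real k))" by simp
  thus "ln (real M) \<ge> ln x / (real k + 1) * (1 / B_fun (real M0) (real k))"
    using p2 pos_divide_le_eq[OF D2] by simp
qed

end
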